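(* Let $\alpha>0$ be a constant. If $g(n)\le \alpha n^2$ for all $n$, then $f_4(n)\le \alpha(1+o(1))\frac{n^2}{2}$ as $n\to\infty$.
   Context: $K_n$ is the complete graph and $K_n^{(4)}$ the complete $4$-uniform hypergraph on $n$ vertices. A complete $4$-partite $4$-graph is given by pairwise disjoint nonempty vertex sets $V_1,\dots,V_4$, with edges all $4$-sets meeting each $V_i$ in exactly one vertex; $f_4(n)$ is the minimum number of complete $4$-partite $4$-graphs whose edge sets partition the edge set of $K_n^{(4)}$. A complete bipartite subgraph of a graph $G$ has two disjoint nonempty vertex classes $X,Y$ and edge set all $xy$ with $x\in X,y\in Y$ (all these being edges of $G$). For graphs $G,H$, a block is a set $E(B_1)\times E(B_2)$ where $B_1$ is a complete bipartite subgraph of $G$ and $B_2$ is a complete bipartite subgraph of $H$; $g(G,H)$ is the minimum number of blocks partitioning $E(G)\times E(H)$, and $g(n)=g(K_n,K_n)$. *)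

theory Defs
  imports Complex_Main
begin

definition hedges4 :: "nat \<Rightarrow> nat set set" where
  "hedges4 n = {e. e \<subseteq> {..<n} \<and> card e = 4}"

definition kpart4_edges :: "nat set \<times> nat set \<times> nat set \<times> nat set \<Rightarrow> nat set set" where
  "kpart4_edges P = (case P of (V1, V2, V3, V4) \<Rightarrow>
     {{a, b, c, d} | a b c d. a \<in> V1 \<and> b \<in> V2 \<and> c \<in> V3 \<and> d \<in> V4})"

definition is_complete_4partite :: "nat \<Rightarrow> nat set \<times> nat set \<times> nat set \<times> nat set \<Rightarrow> bool" where
  "is_complete_4partite n P = (case P of (V1, V2, V3, V4) \<Rightarrow>
     V1 \<subseteq> {..<n} \<and> V2 \<subseteq> {..<n} \<and> V3 \<subseteq> {..<n} \<and> V4 \<subseteq> {..<n} \<and>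
     V1 \<noteq> {} \<and> V2 \<noteq> {} \<and> V3 \<noteq> {} \<and> V4 \<noteq> {} \<and>
     V1 \<inter> V2 = {} \<and> V1 \<inter> V3 = {} \<and> V1 \<inter> V4 = {} \<and>
     V2 \<inter> V3 = {} \<and> V2 \<inter> V4 = {} \<and> V3 \<inter> V4 = {})"

definition f4 :: "nat \<Rightarrow> nat" where
  "f4 n = (LEAST k. \<exists>Ps. length Ps = k \<and> (\<forall>P\<in>set Ps. is_complete_4partite n P) \<and>
      (\<forall>i<k. \<forall>j<k. i \<noteq> j \<longrightarrow> kpart4_edges (Ps ! i) \<inter> kpart4_edges (Ps ! j) = {}) \<and>
      (\<Union>P\<in>set Ps. kpart4_edges P) = hedges4 n)"

(* A graph is given by a vertex set V and a set E of 2-element subsets of V. *)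
definition bip_edges :: "'a set \<Rightarrow> 'a set \<Rightarrow> 'a set set" where
  "bip_edges X Y = {{x, y} | x y. x \<in> X \<and> y \<in> Y}"

definition is_complete_bipartite_subgraph :: "'a set \<Rightarrow> 'a set set \<Rightarrow> 'a set \<Rightarrow> 'a set \<Rightarrow> bool" where
  "is_complete_bipartite_subgraph V E X Y \<longleftrightarrow>
     X \<subseteq> V \<and> Y \<subseteq> V \<and> X \<noteq> {} \<and> Y \<noteq> {} \<and> X \<inter> Y = {} \<and> bip_edges X Y \<subseteq> E"

definition block :: "'a set \<times> 'a set \<times> 'b set \<times> 'b set \<Rightarrow> ('a set \<times> 'b set) set" where
  "block B = (case B of (X1, Y1, X2, Y2) \<Rightarrow> bip_edges X1 Y1 \<times> bip_edges X2 Y2)"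

definition is_block :: "'a set \<Rightarrow> 'a set set \<Rightarrow> 'b set \<Rightarrow> 'b set set \<Rightarrow>
    'a set \<times> 'a set \<times> 'b set \<times> 'b set \<Rightarrow> bool" where
  "is_block V1 E1 V2 E2 B = (case B of (X1, Y1, X2, Y2) \<Rightarrow>
     is_complete_bipartite_subgraph V1 E1 X1 Y1 \<and> is_complete_bipartite_subgraph V2 E2 X2 Y2)"

definition gGH :: "'a set \<Rightarrow> 'a set set \<Rightarrow> 'b set \<Rightarrow> 'b set set \<Rightarrow> nat" where
  "gGH V1 E1 V2 E2 = (LEAST k. \<exists>Bs. length Bs = k \<and> (\<forall>B\<in>set Bs. is_block V1 E1 V2 E2 B) \<and>
      (\<forall>i<k. \<forall>j<k. i \<noteq> j \<longrightarrow> block (Bs ! i) \<inter> block (Bs ! j) = {}) \<and>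
      (\<Union>B\<in>set Bs. block B) = E1 \<times> E2)"

definition Kn_edges :: "nat \<Rightarrow> nat set set" where
  "Kn_edges n = {e. e \<subseteq> {..<n} \<and> card e = 2}"

definition g :: "nat \<Rightarrow> nat" where
  "g n = gGH {..<n} (Kn_edges n) {..<n} (Kn_edges n)"

end

theory Submission
  imports Defs
begin
definition exact :: "('p \<Rightarrow> 'e set) \<Rightarrow> 'p list \<Rightarrow> 'e set \<Rightarrow> bool" where
  "exact F Ps T \<longleftrightarrow> (\<forall>i<length Ps. \<forall>j<length Ps. i \<noteq> j \<longrightarrow> F (Ps ! i) \<inter> F (Ps ! j) = {}) \<and>
     (\<Union>P\<in>set Ps. F P) = T"

lemma exact_nil: "exact F [] {}" by (simp add: exact_def)

lemma exact_sub: "exact F Ps T \<Longrightarrow> P \<in> set Ps \<Longrightarrow> F P \<subseteq> T"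
  by (auto simp: exact_def)

lemma exact_append:
  assumes "exact F Ps T1" "exact F Qs T2" "T1 \<inter> T2 = {}"
  shows "exact F (Ps @ Qs) (T1 \<union> T2)"
proof -
  have "F ((Ps@Qs) ! i) \<inter> F ((Ps@Qs) ! j) = {}"
    if "i < length (Ps@Qs)" "j < length (Ps@Qs)" "i \<noteq> j" for i j
  proof -
    consider "i < length Ps" "j < length Ps" | "i < length Ps" "j \<ge> length Ps"
      | "i \<ge> length Ps" "j < length Ps" | "i \<ge> length Ps" "j \<ge> length Ps" by linarith
    then show ?thesis
    proof cases
      case 1 then show ?thesis using assms(1) that by (auto simp: exact_def nth_append)
    next
      case 2
      have "F (Ps!i) \<subseteq> T1" using exact_sub[OF assms(1)] 2 by simp
      moreover have "F (Qs!(j - length Ps)) \<subseteq> T2" using exact_sub[OF assms(2)] 2 that by simp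
      ultimately show ?thesis using 2 assms(3) by (auto simp: nth_append)
    next
      case 3
      have "F (Ps!j) \<subseteq> T1" using exact_sub[OF assms(1)] 3 by simp
      moreover have "F (Qs!(i - length Ps)) \<subseteq> T2" using exact_sub[OF assms(2)] 3 that by simp
      ultimately show ?thesis using 3 assms(3) by (auto simp: nth_append)
    next
      case 4
      then show ?thesis using assms(2) that
        by (auto simp: exact_def nth_append)
    qed
  qed
  then show ?thesis using assms by (auto simp: exact_def)
qed

lemma exact_map:
  assumes "exact F Ps T" "\<And>P. P \<in> set Ps \<Longrightarrow> G (h P) = \<phi> ` F P" "inj_on \<phi> T"
  shows "exact G (map h Ps) (\<phi> ` T)"
proof -
  have "G (h (Ps!i)) \<inter> G (h (Ps!j)) = {}" if "i < length Ps" "j < length Ps" "i \<noteq> j" for i j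
  proof -
    have "G (h (Ps!i)) \<inter> G (h (Ps!j)) = \<phi> ` F (Ps!i) \<inter> \<phi> ` F (Ps!j)" using assms(2) that by simp
    also have "\<dots> = \<phi> ` (F (Ps!i) \<inter> F (Ps!j))"
      using inj_on_image_Int[OF assms(3)] exact_sub[OF assms(1)] that by simp
    also have "\<dots> = {}" using assms(1) that by (simp add: exact_def)
    finally show ?thesis .
  qed
  moreover have "(\<Union>P\<in>set (map h Ps). G P) = \<phi> ` T"
    using assms(1,2) by (auto simp: exact_def)
  ultimately show ?thesis by (auto simp: exact_def)
qed

definition valid4 :: "nat \<Rightarrow> (nat set \<times> nat set \<times> nat set \<times> nat set) list \<Rightarrow> bool" where
  "valid4 n Ps \<longleftrightarrow> (\<forall>P\<in>set Ps. is_complete_4partite n P) \<and> exact kpart4_edges Ps (hedges4 n)"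

lemma f4_alt: "f4 n = (LEAST k. \<exists>Ps. length Ps = k \<and> valid4 n Ps)"
  unfolding f4_def valid4_def exact_def
  apply (rule arg_cong[where f=Least], rule ext)
  apply (rule iffI; elim exE conjE; intro exI conjI; simp)
  done

lemma f4_le: assumes "valid4 n Ps" shows "f4 n \<le> length Ps"
  unfolding f4_alt by (rule Least_le) (rule exI[of _ Ps], simp add: assms)

lemma f4_wit: assumes "\<exists>Ps. valid4 n Ps" shows "\<exists>Ps. valid4 n Ps \<and> length Ps = f4 n"
proof -
  from assms obtain Ps where "valid4 n Ps" by blast
  have "\<exists>Ps. length Ps = (LEAST k. \<exists>Ps. length Ps = k \<and> valid4 n Ps) \<and> valid4 n Ps"
    by (rule LeastI_ex[where P="\<lambda>k. \<exists>Ps. length Ps = k \<and> valid4 n Ps"]) (rule exI[of _ "length Ps"], rule exI[of _ Ps], simp add: \<open>valid4 n Ps\<close>)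
  then show ?thesis unfolding f4_alt by blast
qed

definition validg :: "nat \<Rightarrow> (nat set \<times> nat set \<times> nat set \<times> nat set) list \<Rightarrow> bool" where
  "validg m Bs \<longleftrightarrow> (\<forall>B\<in>set Bs. is_block {..<m} (Kn_edges m) {..<m} (Kn_edges m) B) \<and>
      exact block Bs (Kn_edges m \<times> Kn_edges m)"

lemma g_alt: "g m = (LEAST k. \<exists>Bs. length Bs = k \<and> validg m Bs)"
  unfolding g_def gGH_def validg_def exact_def
  apply (rule arg_cong[where f=Least], rule ext)
  apply (rule iffI; elim exE conjE; intro exI conjI; simp)
  done

lemma g_wit: assumes "\<exists>Bs. validg m Bs" shows "\<exists>Bs. validg m Bs \<and> length Bs = g m"
proof -
  from assms obtain Bs where "validg m Bs" by blast
  have "\<exists>Bs. length Bs = (LEAST k. \<exists>Bs. length Bs = k \<and> validg m Bs) \<and> validg m Bs"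
    by (rule LeastI_ex[where P="\<lambda>k. \<exists>Bs. length Bs = k \<and> validg m Bs"]) (rule exI[of _ "length Bs"], rule exI[of _ Bs], simp add: \<open>validg m Bs\<close>)
  then show ?thesis unfolding g_alt by blast
qed

lemma kp_mem: "e \<in> kpart4_edges (V1, V2, V3, V4) \<longleftrightarrow> (\<exists>a b c d. e = {a,b,c,d} \<and> a \<in> V1 \<and> b \<in> V2 \<and> c \<in> V3 \<and> d \<in> V4)"
  by (auto simp: kpart4_edges_def)

lemma triple_sorted:
  fixes S :: "nat set"
  assumes "card S = 3"
  shows "\<exists>a c b. S = {a,c,b} \<and> a < c \<and> c < b"
proof -
  have fin: "finite S" by (rule card_ge_0_finite) (simp add: assms)
  define xs where "xs = sorted_list_of_set S"
  have len: "length xs = 3" using assms fin by (simp add: xs_def)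
  have sw: "sorted_wrt (<) xs" unfolding xs_def by (rule strict_sorted_list_of_set)
  have st: "set xs = S" using fin by (simp add: xs_def)
  from len obtain a c b where "xs = [a,c,b]"
    by (auto simp: numeral_3_eq_3 length_Suc_conv)
  then show ?thesis using sw st by auto
qed

lemma pair_sorted:
  fixes S :: "nat set"
  assumes "card S = 2"
  shows "\<exists>a b. S = {a,b} \<and> a < b"
proof -
  from assms obtain x y where "S = {x,y}" "x \<noteq> y" by (auto simp: card_2_iff)
  then show ?thesis
    by (metis insert_commute linorder_neq_iff)
qed

lemma mid3:
  fixes a c b a' c' b' :: nat
  assumes "{a,c,b} = {a',c',b'}" "a < c" "c < b" "a' < c'" "c' < b'"
  shows "c = c'"
proof -
  have "c' = a \<or> c' = c \<or> c' = b" "a' = a \<or> a' = c \<or> a' = b" "b' = a \<or> b' = c \<or> b' = b"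
    using assms(1) by blast+
  then show ?thesis using assms(2-) by (elim disjE) simp_all
qed

definition midP :: "nat set \<Rightarrow> nat set \<Rightarrow> nat \<Rightarrow> nat set \<times> nat set \<times> nat set \<times> nat set" where
  "midP A B c = ({x\<in>A. x < c}, {c}, {x\<in>A. c < x}, B)"

definition midL :: "nat set \<Rightarrow> nat list" where
  "midL A = filter (\<lambda>c. (\<exists>x\<in>A. x < c) \<and> (\<exists>x\<in>A. c < x)) (sorted_list_of_set A)"

definition mid :: "nat set \<Rightarrow> nat set \<Rightarrow> (nat set \<times> nat set \<times> nat set \<times> nat set) list" where
  "mid A B = map (midP A B) (midL A)"

lemma midL_set: "finite A \<Longrightarrow> set (midL A) = {c\<in>A. (\<exists>x\<in>A. x < c) \<and> (\<exists>x\<in>A. c < x)}"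
  by (auto simp: midL_def)

lemma midL_distinct: "distinct (midL A)"
  by (simp add: midL_def)

lemma mid_len: "finite A \<Longrightarrow> length (mid A B) \<le> card A"
  unfolding mid_def midL_def using length_filter_le[of _ "sorted_list_of_set A"] by simp

lemma midP_mem:
  "e \<in> kpart4_edges (midP A B c) \<longleftrightarrow> (\<exists>a b d. e = {a,c,b,d} \<and> a \<in> A \<and> a < c \<and> b \<in> A \<and> c < b \<and> d \<in> B)"
  unfolding midP_def kp_mem by blast

lemma midP_edge_facts:
  assumes "e \<in> kpart4_edges (midP A B c)" "c \<in> A" "A \<inter> B = {}"
  shows "\<exists>a b d. e \<inter> A = {a,c,b} \<and> a < c \<and> c < b \<and> e \<inter> B = {d} \<and> e \<subseteq> A \<union> B"
proof -
  from assms(1) obtain a b d where e: "e = {a,c,b,d}" "a \<in> A" "a < c" "b \<in> A" "c < b" "d \<in> B"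
    unfolding midP_mem by blast
  have "d \<notin> A" using assms(3) e by blast
  then have "e \<inter> A = {a,c,b}" using e assms(2) by auto
  moreover have "e \<inter> B = {d}" using e assms(2,3) by auto
  moreover have "e \<subseteq> A \<union> B" using e assms(2) by auto
  ultimately show ?thesis using e by blast
qed

lemma mid_exact:
  assumes "finite A" "A \<inter> B = {}"
  shows "exact kpart4_edges (mid A B) {e. e \<subseteq> A \<union> B \<and> card (e \<inter> A) = 3 \<and> card (e \<inter> B) = 1}"
proof -
  let ?xs = "midL A"
  have dis: "kpart4_edges (midP A B c) \<inter> kpart4_edges (midP A B c') = {}"
    if cc: "c \<in> A" "c' \<in> A" "c \<noteq> c'" for c c'
  proof (rule ccontr)
    assume "kpart4_edges (midP A B c) \<inter> kpart4_edges (midP A B c') \<noteq> {}"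
    then obtain e where "e \<in> kpart4_edges (midP A B c)" "e \<in> kpart4_edges (midP A B c')" by blast
    note e12 = this
    obtain a b d where 1: "e \<inter> A = {a,c,b}" "a < c" "c < b"
      using midP_edge_facts[OF e12(1) cc(1) assms(2)] by auto
    obtain a' b' d' where 2: "e \<inter> A = {a',c',b'}" "a' < c'" "c' < b'"
      using midP_edge_facts[OF e12(2) cc(2) assms(2)] by auto
    note 1 2
    then have "c = c'" using mid3[of a c b a' c' b'] by simp
    with cc show False by simp
  qed
  have part1: "\<forall>i<length (mid A B). \<forall>j<length (mid A B). i \<noteq> j \<longrightarrow>
      kpart4_edges (mid A B ! i) \<inter> kpart4_edges (mid A B ! j) = {}"
  proof (intro allI impI)
    fix i j assume ij: "i < length (mid A B)" "j < length (mid A B)" "i \<noteq> j"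
    then have "?xs ! i \<noteq> ?xs ! j" using midL_distinct by (simp add: mid_def nth_eq_iff_index_eq)
    moreover have li: "i < length ?xs" "j < length ?xs" using ij by (simp_all add: mid_def)
    have "?xs ! i \<in> A" using nth_mem[OF li(1)] midL_set[OF assms(1)] by blast
    moreover have "?xs ! j \<in> A" using nth_mem[OF li(2)] midL_set[OF assms(1)] by blast
    ultimately show "kpart4_edges (mid A B ! i) \<inter> kpart4_edges (mid A B ! j) = {}"
      using dis ij by (simp add: mid_def)
  qed
  have part2: "(\<Union>P\<in>set (mid A B). kpart4_edges P) = {e. e \<subseteq> A \<union> B \<and> card (e \<inter> A) = 3 \<and> card (e \<inter> B) = 1}"
  proof (rule set_eqI, rule iffI)
    fix e assume "e \<in> (\<Union>P\<in>set (mid A B). kpart4_edges P)"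
    then obtain c where c: "c \<in> set ?xs" "e \<in> kpart4_edges (midP A B c)" by (auto simp: mid_def)
    then have "c \<in> A" using midL_set[OF assms(1)] by auto
    from midP_edge_facts[OF c(2) this assms(2)] obtain a b d where
      "e \<inter> A = {a,c,b}" "a < c" "c < b" "e \<inter> B = {d}" "e \<subseteq> A \<union> B" by auto
    then show "e \<in> {e. e \<subseteq> A \<union> B \<and> card (e \<inter> A) = 3 \<and> card (e \<inter> B) = 1}" by simp
  next
    fix e assume "e \<in> {e. e \<subseteq> A \<union> B \<and> card (e \<inter> A) = 3 \<and> card (e \<inter> B) = 1}"
    then have e: "e \<subseteq> A \<union> B" "card (e \<inter> A) = 3" "card (e \<inter> B) = 1" by auto
    from triple_sorted[OF e(2)] obtain a c b where t: "e \<inter> A = {a,c,b}" "a < c" "c < b" by blast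
    from e(3) obtain d where d: "e \<inter> B = {d}" by (auto simp: card_1_singleton_iff)
    have "e = (e \<inter> A) \<union> (e \<inter> B)" using e(1) by blast
    then have "e = {a,c,b,d}" by (simp add: t(1) d insert_commute)
    moreover have "a \<in> A" "c \<in> A" "b \<in> A" "d \<in> B" using t(1) d by auto
    ultimately have "e \<in> kpart4_edges (midP A B c)" using t unfolding midP_mem by blast
    moreover have "c \<in> set ?xs" using midL_set[OF assms(1)] \<open>a \<in> A\<close> \<open>c \<in> A\<close> \<open>b \<in> A\<close> t by auto
    ultimately show "e \<in> (\<Union>P\<in>set (mid A B). kpart4_edges P)" by (auto simp: mid_def)
  qed
  show ?thesis using part1 part2 by (simp add: exact_def)
qed

lemma mid_valid:
  assumes "finite A" "A \<inter> B = {}" "B \<noteq> {}" "A \<union> B \<subseteq> {..<N}"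
  shows "\<forall>P\<in>set (mid A B). is_complete_4partite N P"
proof
  fix P assume "P \<in> set (mid A B)"
  then obtain c where c: "c \<in> set (midL A)" "P = midP A B c" by (auto simp: mid_def)
  then have "c \<in> A" "\<exists>x\<in>A. x < c" "\<exists>x\<in>A. c < x" using midL_set[OF assms(1)] by auto
  then show "is_complete_4partite N P" using c assms(2-4)
    by (auto simp: is_complete_4partite_def midP_def)
qed

lemma card_split:
  assumes "finite e" "A \<inter> B = {}" "e \<subseteq> A \<union> B"
  shows "card e = card (e \<inter> A) + card (e \<inter> B)"
proof -
  have "e = (e \<inter> A) \<union> (e \<inter> B)" using assms(3) by blast
  then have "card e = card ((e \<inter> A) \<union> (e \<inter> B))" by simp
  also have "\<dots> = card (e \<inter> A) + card (e \<inter> B)"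
    by (rule card_Un_disjoint) (use assms in auto)
  finally show ?thesis .
qed

lemma c4_mono: "is_complete_4partite n P \<Longrightarrow> n \<le> N \<Longrightarrow> is_complete_4partite N P"
  unfolding is_complete_4partite_def by (cases P) auto

lemma kp_image: "kpart4_edges (f ` V1, f ` V2, f ` V3, f ` V4) = image f ` kpart4_edges (V1, V2, V3, V4)"
proof (rule set_eqI, rule iffI)
  fix e assume "e \<in> kpart4_edges (f ` V1, f ` V2, f ` V3, f ` V4)"
  then obtain a b c d where "e = {f a, f b, f c, f d}" "a \<in> V1" "b \<in> V2" "c \<in> V3" "d \<in> V4"
    unfolding kp_mem by blast
  then have "e = f ` {a,b,c,d}" "{a,b,c,d} \<in> kpart4_edges (V1, V2, V3, V4)" unfolding kp_mem by auto
  then show "e \<in> image f ` kpart4_edges (V1, V2, V3, V4)" by blast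
next
  fix e assume "e \<in> image f ` kpart4_edges (V1, V2, V3, V4)"
  then obtain e' where e': "e = f ` e'" "e' \<in> kpart4_edges (V1, V2, V3, V4)" by blast
  then obtain a b c d where "e' = {a,b,c,d}" "a \<in> V1" "b \<in> V2" "c \<in> V3" "d \<in> V4"
    unfolding kp_mem by blast
  with e' have "e = f ` {a,b,c,d}" "a \<in> V1" "b \<in> V2" "c \<in> V3" "d \<in> V4" by auto
  then show "e \<in> kpart4_edges (f ` V1, f ` V2, f ` V3, f ` V4)" unfolding kp_mem
    by (intro exI[of _ "f a"] exI[of _ "f b"] exI[of _ "f c"] exI[of _ "f d"]) auto
qed

lemma hedges4_0: "hedges4 0 = {}"
  by (auto simp: hedges4_def)

lemma valid4_0: "valid4 0 []"
  by (simp add: valid4_def exact_nil hedges4_0)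

lemma odd_split:
  "hedges4 (Suc n) = hedges4 n \<union> {e. e \<subseteq> {..<n} \<union> {n} \<and> card (e \<inter> {..<n}) = 3 \<and> card (e \<inter> {n}) = 1}"
  (is "?L = ?R1 \<union> ?R2")
proof (rule set_eqI, rule iffI)
  fix e assume e: "e \<in> ?L"
  then have e1: "e \<subseteq> {..<n} \<union> {n}" "card e = 4" "finite e" by (auto simp: hedges4_def lessThan_Suc intro: finite_subset)
  show "e \<in> ?R1 \<union> ?R2"
  proof (cases "n \<in> e")
    case True
    then have "e \<inter> {n} = {n}" by auto
    moreover have "card e = card (e \<inter> {..<n}) + card (e \<inter> {n})" by (rule card_split) (use e1 in auto)
    ultimately show ?thesis using e1 by auto
  next
    case False
    then have "e \<subseteq> {..<n}" using e1 by auto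
    then show ?thesis using e1 by (auto simp: hedges4_def)
  qed
next
  fix e assume "e \<in> ?R1 \<union> ?R2"
  then show "e \<in> ?L"
  proof
    assume "e \<in> ?R1" then show ?thesis by (auto simp: hedges4_def)
  next
    assume e: "e \<in> ?R2"
    then have "finite e" by (auto intro: finite_subset)
    then have "card e = card (e \<inter> {..<n}) + card (e \<inter> {n})" by (rule card_split) (use e in auto)
    then show ?thesis using e by (auto simp: hedges4_def)
  qed
qed

lemma odd_step: assumes "valid4 n Ps" shows "valid4 (Suc n) (Ps @ mid {..<n} {n})"
proof -
  have d: "hedges4 n \<inter> {e. e \<subseteq> {..<n} \<union> {n} \<and> card (e \<inter> {..<n}) = 3 \<and> card (e \<inter> {n}) = 1} = {}"
  proof (rule ccontr)
    assume "\<not> ?thesis"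
    then obtain e where "e \<subseteq> {..<n}" "card (e \<inter> {n}) = 1" by (auto simp: hedges4_def)
    moreover then have "e \<inter> {n} = {}" by auto
    ultimately show False by simp
  qed
  have "exact kpart4_edges (Ps @ mid {..<n} {n}) (hedges4 (Suc n))"
    unfolding odd_split
    by (rule exact_append[OF _ _ d]) (use assms mid_exact[of "{..<n}" "{n}"] in \<open>auto simp: valid4_def\<close>)
  moreover have "\<forall>P\<in>set (mid {..<n} {n}). is_complete_4partite (Suc n) P"
    by (rule mid_valid) auto
  moreover have "\<forall>P\<in>set Ps. is_complete_4partite (Suc n) P"
    using assms c4_mono by (auto simp: valid4_def)
  ultimately show ?thesis by (auto simp: valid4_def)
qed

lemma valid4_ex: "\<exists>Ps. valid4 n Ps"
proof (induction n)
  case 0 then show ?case using valid4_0 by blast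
next
  case (Suc n) then show ?case using odd_step by blast
qed

lemma f4_odd: "f4 (Suc n) \<le> f4 n + n"
proof -
  obtain Ps where "valid4 n Ps" "length Ps = f4 n" using f4_wit valid4_ex by blast
  then have "f4 (Suc n) \<le> length (Ps @ mid {..<n} {n})" using odd_step f4_le by blast
  also have "\<dots> \<le> f4 n + n" using mid_len[of "{..<n}" "{n}"] \<open>length Ps = f4 n\<close> by simp
  finally show ?thesis .
qed

lemma f4_zero: "f4 0 = 0"
  using f4_le[OF valid4_0] by simp

lemma Kn_fin: "finite (Kn_edges m)"
  by (rule finite_subset[of _ "Pow {..<m}"]) (auto simp: Kn_edges_def)

definition tb :: "nat set \<times> nat set \<Rightarrow> nat set \<times> nat set \<times> nat set \<times> nat set" where
  "tb x = ({Min (fst x)}, {Max (fst x)}, {Min (snd x)}, {Max (snd x)})"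

lemma two_mm: fixes p :: "nat set" assumes "card p = 2"
  shows "p = {Min p, Max p} \<and> Min p < Max p"
proof -
  obtain a b where "p = {a,b}" "a < b" using pair_sorted[OF assms] by blast
  then show ?thesis by (simp add: min_def max_def)
qed

lemma bip_single: "bip_edges {a} {b} = {{a,b}}"
  by (auto simp: bip_edges_def)

lemma exact_single: "distinct xs \<Longrightarrow> exact (\<lambda>x. {x}) xs (set xs)"
  by (auto simp: exact_def nth_eq_iff_index_eq)

lemma g_ex: "\<exists>Bs. validg m Bs"
proof -
  obtain xs where xs: "set xs = Kn_edges m \<times> Kn_edges m" "distinct xs"
    using finite_distinct_list[of "Kn_edges m \<times> Kn_edges m"] Kn_fin by blast
  have blk: "block (tb x) = id ` {x}" if "x \<in> set xs" for x
  proof -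
    obtain p q where x: "x = (p,q)" by (cases x)
    have "card p = 2" "card q = 2" using that xs(1) x by (auto simp: Kn_edges_def)
    then have "p = {Min p, Max p}" "q = {Min q, Max q}" using two_mm by blast+
    then show ?thesis using x by (simp add: tb_def block_def bip_single)
  qed
  have "exact block (map tb xs) (id ` set xs)"
    by (rule exact_map[OF exact_single[OF xs(2)]]) (use blk in auto)
  moreover have isb: "is_block {..<m} (Kn_edges m) {..<m} (Kn_edges m) (tb x)" if "x \<in> set xs" for x
  proof -
    obtain p q where x: "x = (p,q)" by (cases x)
    have pq: "p \<in> Kn_edges m" "q \<in> Kn_edges m" using that xs(1) x by auto
    then have "card p = 2" "card q = 2" by (auto simp: Kn_edges_def)
    then have p: "p = {Min p, Max p}" "Min p < Max p" and q: "q = {Min q, Max q}" "Min q < Max q"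
      using two_mm by blast+
    have "Min p \<in> p" "Max p \<in> p" "Min q \<in> q" "Max q \<in> q" using p q by (metis insertI1 insertI2 singletonI)+
    moreover have "p \<subseteq> {..<m}" "q \<subseteq> {..<m}" using pq by (auto simp: Kn_edges_def)
    moreover have "bip_edges {Min p} {Max p} \<subseteq> Kn_edges m" "bip_edges {Min q} {Max q} \<subseteq> Kn_edges m"
      using pq p q by (simp_all add: bip_single)
    ultimately show ?thesis using p q x
      by (auto simp: is_block_def tb_def is_complete_bipartite_subgraph_def)
  qed
  ultimately have "validg m (map tb xs)" unfolding validg_def xs(1)[symmetric] by auto
  then show ?thesis by blast
qed

lemma f4_zero': "f4 0 = 0" by (rule f4_zero)

definition Tk :: "nat \<Rightarrow> nat \<Rightarrow> nat set set" where
  "Tk m k = {e. e \<subseteq> {..<2*m} \<and> card e = 4 \<and> card (e \<inter> {..<m}) = k}"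

definition sm :: "nat \<Rightarrow> nat set \<times> nat set \<times> nat set \<times> nat set \<Rightarrow> nat set \<times> nat set \<times> nat set \<times> nat set" where
  "sm m P = (case P of (V1,V2,V3,V4) \<Rightarrow> ((\<lambda>x. x+m) ` V1, (\<lambda>x. x+m) ` V2, (\<lambda>x. x+m) ` V3, (\<lambda>x. x+m) ` V4))"

definition bm :: "nat \<Rightarrow> nat set \<times> nat set \<times> nat set \<times> nat set \<Rightarrow> nat set \<times> nat set \<times> nat set \<times> nat set" where
  "bm m P = (case P of (X1,Y1,X2,Y2) \<Rightarrow> (X1, Y1, (\<lambda>x. x+m) ` X2, (\<lambda>x. x+m) ` Y2))"

definition phi :: "nat \<Rightarrow> nat set \<times> nat set \<Rightarrow> nat set" where
  "phi m x = fst x \<union> (\<lambda>y. y+m) ` snd x"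

lemma AB: "{..<2*m} = {..<m} \<union> {m..<2*m::nat}" "{..<m} \<inter> {m..<2*m::nat} = {}"
  by auto

lemma shift_back: "X \<subseteq> {m..} \<Longrightarrow> (\<lambda>x. x + m) ` ((\<lambda>x. x - m) ` X) = (X::nat set)"
  by (force simp: image_image)

lemma inj_shift: "inj (\<lambda>x::nat. x + m)" by (rule injI) simp

lemma card_shift: "card ((\<lambda>x::nat. x + m) ` X) = card X"
  by (rule card_image) (rule inj_on_subset[OF inj_shift], simp)

lemma set_a: "hedges4 m = Tk m 4"
proof (rule set_eqI, rule iffI)
  fix e assume "e \<in> hedges4 m"
  then have e: "e \<subseteq> {..<m}" "card e = 4" by (auto simp: hedges4_def)
  then have "e \<inter> {..<m} = e" by blast
  then show "e \<in> Tk m 4" using e by (auto simp: Tk_def)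
next
  fix e assume "e \<in> Tk m 4"
  then have e: "e \<subseteq> {..<2*m}" "card e = 4" "card (e \<inter> {..<m}) = 4" by (auto simp: Tk_def)
  have "finite e" using e(1) by (rule finite_subset) simp
  then have "e \<inter> {..<m} = e" using e by (intro card_subset_eq) auto
  then show "e \<in> hedges4 m" using e by (auto simp: hedges4_def)
qed

lemma set_b: "image (\<lambda>x. x+m) ` hedges4 m = Tk m 0"
proof (rule set_eqI, rule iffI)
  fix e assume "e \<in> image (\<lambda>x. x+m) ` hedges4 m"
  then obtain e' where e': "e = (\<lambda>x. x+m) ` e'" "e' \<subseteq> {..<m}" "card e' = 4" by (auto simp: hedges4_def)
  have "e \<subseteq> {..<2*m}" "e \<inter> {..<m} = {}" using e' by auto
  moreover have "card e = 4" using e' card_shift by simp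
  ultimately show "e \<in> Tk m 0" by (simp add: Tk_def)
next
  fix e assume "e \<in> Tk m 0"
  then have e: "e \<subseteq> {..<2*m}" "card e = 4" "card (e \<inter> {..<m}) = 0" by (auto simp: Tk_def)
  have fin: "finite e" using e(1) by (rule finite_subset) simp
  then have "e \<inter> {..<m} = {}" using e(3) by simp
  then have eB: "e \<subseteq> {m..}" using e(1) by auto
  define e' where "e' = (\<lambda>x. x - m) ` e"
  have ee: "(\<lambda>x. x+m) ` e' = e" unfolding e'_def by (rule shift_back[OF eB])
  have "e' \<subseteq> {..<m}" using e(1) eB unfolding e'_def by auto
  moreover have "card e' = 4" using card_shift[of m e'] ee e(2) by simp
  ultimately show "e \<in> image (\<lambda>x. x+m) ` hedges4 m" using ee by (auto simp: hedges4_def)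
qed

lemma set_c: "{e. e \<subseteq> {..<m} \<union> {m..<2*m} \<and> card (e \<inter> {..<m}) = 3 \<and> card (e \<inter> {m..<2*m}) = 1} = Tk m 3"
proof (rule set_eqI, rule iffI)
  fix e assume "e \<in> {e. e \<subseteq> {..<m} \<union> {m..<2*m} \<and> card (e \<inter> {..<m}) = 3 \<and> card (e \<inter> {m..<2*m}) = 1}"
  then have e: "e \<subseteq> {..<m} \<union> {m..<2*m}" "card (e \<inter> {..<m}) = 3" "card (e \<inter> {m..<2*m}) = 1" by auto
  have "finite e" using e(1) by (rule finite_subset) simp
  then have "card e = card (e \<inter> {..<m}) + card (e \<inter> {m..<2*m})" using e(1) by (intro card_split) auto
  then show "e \<in> Tk m 3" using e by (auto simp: Tk_def)
next
  fix e assume "e \<in> Tk m 3"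
  then have e: "e \<subseteq> {..<2*m}" "card e = 4" "card (e \<inter> {..<m}) = 3" by (auto simp: Tk_def)
  have "finite e" using e(1) by (rule finite_subset) simp
  then have "card e = card (e \<inter> {..<m}) + card (e \<inter> {m..<2*m})" using e(1) by (intro card_split) auto
  then show "e \<in> {e. e \<subseteq> {..<m} \<union> {m..<2*m} \<and> card (e \<inter> {..<m}) = 3 \<and> card (e \<inter> {m..<2*m}) = 1}"
    using e by auto
qed

lemma set_d: "{e. e \<subseteq> {m..<2*m} \<union> {..<m} \<and> card (e \<inter> {m..<2*m}) = 3 \<and> card (e \<inter> {..<m}) = 1} = Tk m 1"
proof (rule set_eqI, rule iffI)
  fix e assume "e \<in> {e. e \<subseteq> {m..<2*m} \<union> {..<m} \<and> card (e \<inter> {m..<2*m}) = 3 \<and> card (e \<inter> {..<m}) = 1}"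
  then have e: "e \<subseteq> {..<m} \<union> {m..<2*m}" "card (e \<inter> {m..<2*m}) = 3" "card (e \<inter> {..<m}) = 1" by auto
  have "finite e" using e(1) by (rule finite_subset) simp
  then have "card e = card (e \<inter> {..<m}) + card (e \<inter> {m..<2*m})" using e(1) by (intro card_split) auto
  then show "e \<in> Tk m 1" using e by (auto simp: Tk_def)
next
  fix e assume "e \<in> Tk m 1"
  then have e: "e \<subseteq> {..<2*m}" "card e = 4" "card (e \<inter> {..<m}) = 1" by (auto simp: Tk_def)
  have "finite e" using e(1) by (rule finite_subset) simp
  then have "card e = card (e \<inter> {..<m}) + card (e \<inter> {m..<2*m})" using e(1) by (intro card_split) auto
  then show "e \<in> {e. e \<subseteq> {m..<2*m} \<union> {..<m} \<and> card (e \<inter> {m..<2*m}) = 3 \<and> card (e \<inter> {..<m}) = 1}"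
    using e by auto
qed

lemma set_e: "phi m ` (Kn_edges m \<times> Kn_edges m) = Tk m 2"
proof (rule set_eqI, rule iffI)
  fix e assume "e \<in> phi m ` (Kn_edges m \<times> Kn_edges m)"
  then obtain p q where pq: "e = p \<union> (\<lambda>y. y+m) ` q" "p \<subseteq> {..<m}" "card p = 2" "q \<subseteq> {..<m}" "card q = 2"
    by (auto simp: phi_def Kn_edges_def)
  have sq: "(\<lambda>y. y+m) ` q \<subseteq> {m..<2*m}" using pq by auto
  have fp: "finite p" "finite ((\<lambda>y. y+m) ` q)" using pq by (auto intro: finite_subset)
  have "card e = card p + card ((\<lambda>y. y+m) ` q)" unfolding pq(1)
    by (rule card_Un_disjoint[OF fp]) (use pq sq in auto)
  then have "card e = 4" using pq card_shift by simp
  moreover have "e \<inter> {..<m} = p" using pq sq by auto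
  moreover have "e \<subseteq> {..<2*m}" using pq sq by auto
  ultimately show "e \<in> Tk m 2" using pq by (simp add: Tk_def)
next
  fix e assume "e \<in> Tk m 2"
  then have e: "e \<subseteq> {..<2*m}" "card e = 4" "card (e \<inter> {..<m}) = 2" by (auto simp: Tk_def)
  have "finite e" using e(1) by (rule finite_subset) simp
  then have "card e = card (e \<inter> {..<m}) + card (e \<inter> {m..<2*m})" using e(1) by (intro card_split) auto
  then have cB: "card (e \<inter> {m..<2*m}) = 2" using e by simp
  define q where "q = (\<lambda>x. x - m) ` (e \<inter> {m..<2*m})"
  have sq: "(\<lambda>x. x+m) ` q = e \<inter> {m..<2*m}" unfolding q_def by (rule shift_back) auto
  have "card q = 2" using card_shift[of m q] sq cB by simp
  moreover have "q \<subseteq> {..<m}" unfolding q_def by auto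
  moreover have "e = (e \<inter> {..<m}) \<union> (\<lambda>x. x+m) ` q" using sq e(1) by auto
  ultimately have "e = phi m (e \<inter> {..<m}, q)" "(e \<inter> {..<m}, q) \<in> Kn_edges m \<times> Kn_edges m"
    using e by (auto simp: phi_def Kn_edges_def)
  then show "e \<in> phi m ` (Kn_edges m \<times> Kn_edges m)" by blast
qed

lemma inj_phi: "inj_on (phi m) (Kn_edges m \<times> Kn_edges m)"
proof (rule inj_onI)
  fix x y assume x: "x \<in> Kn_edges m \<times> Kn_edges m" and y: "y \<in> Kn_edges m \<times> Kn_edges m" and eq: "phi m x = phi m y"
  obtain p q where xpq: "x = (p,q)" by (cases x)
  obtain p' q' where ypq: "y = (p',q')" by (cases y)
  have sub: "p \<subseteq> {..<m}" "q \<subseteq> {..<m}" "p' \<subseteq> {..<m}" "q' \<subseteq> {..<m}"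
    using x y xpq ypq by (auto simp: Kn_edges_def)
  have eq': "p \<union> (\<lambda>y. y+m) ` q = p' \<union> (\<lambda>y. y+m) ` q'" using eq xpq ypq by (simp add: phi_def insert_commute)
  have "p = (p \<union> (\<lambda>y. y+m) ` q) \<inter> {..<m}" using sub by auto
  also have "\<dots> = (p' \<union> (\<lambda>y. y+m) ` q') \<inter> {..<m}" using eq' by simp
  also have "\<dots> = p'" using sub by auto
  finally have pp: "p = p'" .
  have "(\<lambda>y. y+m) ` q = (p \<union> (\<lambda>y. y+m) ` q) - {..<m}" using sub by auto
  also have "\<dots> = (p' \<union> (\<lambda>y. y+m) ` q') - {..<m}" using eq' by simp
  also have "\<dots> = (\<lambda>y. y+m) ` q'" using sub by auto
  finally have "q = q'" using inj_image_eq_iff[OF inj_shift] by blast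
  then show "x = y" using pp xpq ypq by simp
qed

lemma bm_edges: "kpart4_edges (bm m B) = phi m ` block B"
proof -
  obtain X1 Y1 X2 Y2 where B: "B = (X1,Y1,X2,Y2)" by (cases B)
  have bB: "block B = bip_edges X1 Y1 \<times> bip_edges X2 Y2" by (simp add: B block_def)
  have bmB: "bm m B = (X1,Y1,(\<lambda>x. x+m) ` X2, (\<lambda>x. x+m) ` Y2)" by (simp add: B bm_def)
  show ?thesis
  proof (rule set_eqI, rule iffI)
    fix e assume "e \<in> kpart4_edges (bm m B)"
    then have "e \<in> kpart4_edges (X1, Y1, (\<lambda>x. x+m) ` X2, (\<lambda>x. x+m) ` Y2)" by (simp add: bmB)
    then obtain a b c' d' where "e = {a,b,c',d'}" "a \<in> X1" "b \<in> Y1" "c' \<in> (\<lambda>x. x+m) ` X2" "d' \<in> (\<lambda>x. x+m) ` Y2"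
      unfolding kp_mem by blast
    then obtain c d where abcd: "e = {a,b,c+m,d+m}" "a \<in> X1" "b \<in> Y1" "c \<in> X2" "d \<in> Y2"
      by blast
    have "{a,b} \<in> bip_edges X1 Y1" "{c,d} \<in> bip_edges X2 Y2" using abcd unfolding bip_edges_def by blast+
    then have "({a,b},{c,d}) \<in> block B" unfolding bB by blast
    moreover have "e = phi m ({a,b},{c,d})" using abcd by (simp add: phi_def insert_commute)
    ultimately show "e \<in> phi m ` block B" by blast
  next
    fix e assume "e \<in> phi m ` block B"
    then obtain p q where pq: "e = phi m (p,q)" "p \<in> bip_edges X1 Y1" "q \<in> bip_edges X2 Y2" unfolding bB by blast
    obtain a b where ab: "p = {a,b}" "a \<in> X1" "b \<in> Y1" using pq(2) unfolding bip_edges_def by blast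
    obtain c d where cd: "q = {c,d}" "c \<in> X2" "d \<in> Y2" using pq(3) unfolding bip_edges_def by blast
    have "e = {a,b,c+m,d+m}" using pq(1) ab cd by (simp add: phi_def insert_commute)
    moreover have "c+m \<in> (\<lambda>x. x+m) ` X2" "d+m \<in> (\<lambda>x. x+m) ` Y2" using cd by auto
    ultimately have "e \<in> kpart4_edges (X1,Y1,(\<lambda>x. x+m) ` X2, (\<lambda>x. x+m) ` Y2)"
      unfolding kp_mem using ab by blast
    then show "e \<in> kpart4_edges (bm m B)" by (simp add: bmB)
  qed
qed

lemma bm_valid: assumes "is_block {..<m} (Kn_edges m) {..<m} (Kn_edges m) B"
  shows "is_complete_4partite (2*m) (bm m B)"
proof -
  obtain X1 Y1 X2 Y2 where B: "B = (X1,Y1,X2,Y2)" by (cases B)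
  show ?thesis using assms unfolding B
    by (auto simp: is_block_def is_complete_bipartite_subgraph_def bm_def is_complete_4partite_def)
qed

lemma sm_valid: assumes "is_complete_4partite m P"
  shows "is_complete_4partite (2*m) (sm m P)"
proof -
  obtain V1 V2 V3 V4 where P: "P = (V1,V2,V3,V4)" by (cases P)
  show ?thesis using assms unfolding P
    by (auto simp: sm_def is_complete_4partite_def)
qed

lemma sm_edges: "kpart4_edges (sm m P) = image (\<lambda>x. x+m) ` kpart4_edges P"
proof -
  obtain V1 V2 V3 V4 where P: "P = (V1,V2,V3,V4)" by (cases P)
  show ?thesis unfolding P sm_def by (simp add: kp_image)
qed

lemma inj_img_shift: "inj_on (image (\<lambda>x::nat. x+m)) X"
  by (rule inj_onI) (simp add: inj_image_eq_iff[OF inj_shift])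

lemma split5: "hedges4 (2*m) = Tk m 4 \<union> (Tk m 0 \<union> (Tk m 3 \<union> (Tk m 1 \<union> Tk m 2)))"
proof (rule set_eqI, rule iffI)
  fix e assume "e \<in> hedges4 (2*m)"
  then have e: "e \<subseteq> {..<2*m}" "card e = 4" by (auto simp: hedges4_def)
  have "card (e \<inter> {..<m}) \<le> card e" using e by (intro card_mono) (auto intro: finite_subset)
  then have "card (e \<inter> {..<m}) = 0 \<or> card (e \<inter> {..<m}) = 1 \<or> card (e \<inter> {..<m}) = 2 \<or> card (e \<inter> {..<m}) = 3 \<or> card (e \<inter> {..<m}) = 4" using e by linarith
  then show "e \<in> Tk m 4 \<union> (Tk m 0 \<union> (Tk m 3 \<union> (Tk m 1 \<union> Tk m 2)))" using e unfolding Tk_def by blast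
qed (auto simp: Tk_def hedges4_def)

lemma even_step:
  assumes "valid4 m Ps" "validg m Bs"
  shows "valid4 (2*m) (Ps @ (map (sm m) Ps @ (mid {..<m} {m..<2*m} @ (mid {m..<2*m} {..<m} @ map (bm m) Bs))))"
proof -
  have e4: "exact kpart4_edges Ps (Tk m 4)" using assms(1) set_a by (simp add: valid4_def)
  have e0: "exact kpart4_edges (map (sm m) Ps) (Tk m 0)"
    unfolding set_b[symmetric]
    by (rule exact_map[where F=kpart4_edges]) (use assms(1) sm_edges inj_img_shift in \<open>auto simp: valid4_def\<close>)
  have e3: "exact kpart4_edges (mid {..<m} {m..<2*m}) (Tk m 3)"
    unfolding set_c[symmetric] by (rule mid_exact) auto
  have e1: "exact kpart4_edges (mid {m..<2*m} {..<m}) (Tk m 1)"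
    unfolding set_d[symmetric] by (rule mid_exact) auto
  have e2: "exact kpart4_edges (map (bm m) Bs) (Tk m 2)"
    unfolding set_e[symmetric]
    by (rule exact_map[where F=block]) (use assms(2) bm_edges inj_phi in \<open>auto simp: validg_def\<close>)
  have ex: "exact kpart4_edges (Ps @ (map (sm m) Ps @ (mid {..<m} {m..<2*m} @ (mid {m..<2*m} {..<m} @ map (bm m) Bs))))
     (hedges4 (2*m))"
    unfolding split5
    apply (rule exact_append[OF e4])
     apply (rule exact_append[OF e0])
      apply (rule exact_append[OF e3])
       apply (rule exact_append[OF e1 e2])
    by (auto simp: Tk_def)
  have v1: "\<forall>P\<in>set Ps. is_complete_4partite (2*m) P" using assms(1) c4_mono by (auto simp: valid4_def)
  have v2: "\<forall>P\<in>set (map (sm m) Ps). is_complete_4partite (2*m) P" using assms(1) sm_valid by (auto simp: valid4_def)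
  have v3: "\<forall>P\<in>set (mid {..<m} {m..<2*m}). is_complete_4partite (2*m) P"
  proof (cases "m = 0")
    case True then show ?thesis by (simp add: mid_def midL_def)
  next
    case False then show ?thesis by (intro mid_valid) auto
  qed
  have v4: "\<forall>P\<in>set (mid {m..<2*m} {..<m}). is_complete_4partite (2*m) P"
  proof (cases "m = 0")
    case True then show ?thesis by (simp add: mid_def midL_def)
  next
    case False then show ?thesis by (intro mid_valid) auto
  qed
  have v5: "\<forall>P\<in>set (map (bm m) Bs). is_complete_4partite (2*m) P" using assms(2) bm_valid by (auto simp: validg_def)
  show ?thesis using ex v1 v2 v3 v4 v5 by (auto simp: valid4_def)
qed

lemma f4_even: "f4 (2*m) \<le> 2 * f4 m + g m + 2*m"
proof -
  obtain Ps where Ps: "valid4 m Ps" "length Ps = f4 m" using f4_wit valid4_ex by blast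
  obtain Bs where Bs: "validg m Bs" "length Bs = g m" using g_wit g_ex by blast
  have "f4 (2*m) \<le> length (Ps @ (map (sm m) Ps @ (mid {..<m} {m..<2*m} @ (mid {m..<2*m} {..<m} @ map (bm m) Bs))))"
    by (rule f4_le[OF even_step[OF Ps(1) Bs(1)]])
  also have "\<dots> \<le> 2 * f4 m + g m + 2*m"
    using mid_len[of "{..<m}" "{m..<2*m}"] mid_len[of "{m..<2*m}" "{..<m}"] Ps(2) Bs(2) by simp
  finally show ?thesis .
qed

lemma sqrt2_ge: "sqrt 2 \<ge> (1.4::real)"
  by (rule real_le_rsqrt) (simp add: power2_eq_square)

lemma m_le_msqrt: "real m \<le> real m * sqrt (real m)"
proof (cases "m = 0")
  case True then show ?thesis by simp
next
  case False
  then have "1 \<le> sqrt (real m)" by simp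
  then show ?thesis using mult_left_mono[of 1 "sqrt (real m)" "real m"] by simp
qed

lemma lin1: "A = P \<Longrightarrow> 14*t \<le> B \<Longrightarrow> 2*x \<le> 4*t \<Longrightarrow> (F::real) \<le> P + 10*t + 2*x \<Longrightarrow> F \<le> A + B"
  by linarith

lemma lin2: "(F::real) \<le> F2 + 2*x \<Longrightarrow> F2 \<le> P + 10*t + 2*x \<Longrightarrow> P \<le> A \<Longrightarrow> 5*S \<le> B \<Longrightarrow> 2.8*t \<le> S \<Longrightarrow> x \<le> t \<Longrightarrow> F \<le> A + B"
  by linarith

lemma key_bound:
  fixes \<alpha> :: real
  assumes a: "\<alpha> > 0" and gb: "\<forall>n. real (g n) \<le> \<alpha> * (real n)^2"
  shows "real (f4 n) \<le> \<alpha> * (real n)^2 / 2 + 5 * real n * sqrt (real n)"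
proof (induction n rule: less_induct)
  case (less n)
  show ?case
  proof (cases "n = 0")
    case True then show ?thesis by (simp add: f4_zero)
  next
    case False
    define m where "m = n div 2"
    have mn: "m < n" using False by (simp add: m_def)
    have IH: "real (f4 m) \<le> \<alpha> * (real m)^2 / 2 + 5 * real m * sqrt (real m)" using less mn by blast
    define x where "x = real m"
    define t where "t = x * sqrt x"
    have x0: "x \<ge> 0" by (simp add: x_def)
    have tx: "x \<le> t" unfolding t_def x_def by (rule m_le_msqrt)
    have ev: "real (f4 (2*m)) \<le> 2 * \<alpha> * x^2 + 10 * t + 2 * x"
    proof -
      have "real (f4 (2*m)) \<le> real (2 * f4 m + g m + 2*m)" using f4_even[of m] by linarith
      also have "\<dots> = 2 * real (f4 m) + real (g m) + 2 * x" by (simp add: x_def)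
      also have "\<dots> \<le> 2 * (\<alpha> * x^2 / 2 + 5 * t) + \<alpha> * x^2 + 2 * x"
      proof -
        have "real (f4 m) \<le> \<alpha> * x^2 / 2 + 5 * t" using IH unfolding t_def x_def mult.assoc .
        moreover have "real (g m) \<le> \<alpha> * x^2" using gb unfolding x_def by blast
        ultimately show ?thesis by (simp add: algebra_simps)
      qed
      finally show ?thesis by (simp add: algebra_simps)
    qed
    have s2: "(2*x) * sqrt (2*x) \<ge> 2.8 * t"
    proof -
      have "sqrt (2*x) = sqrt 2 * sqrt x" by (simp add: real_sqrt_mult)
      moreover have "sqrt 2 * sqrt x \<ge> 1.4 * sqrt x" using sqrt2_ge x0 by (intro mult_right_mono) auto
      ultimately have "sqrt (2*x) \<ge> 1.4 * sqrt x" by simp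
      then have "(2*x) * sqrt (2*x) \<ge> (2*x) * (1.4 * sqrt x)" using x0 by (intro mult_left_mono) auto
      then show ?thesis unfolding t_def by (simp add: algebra_simps)
    qed
    show ?thesis
    proof (cases "even n")
      case True
      then have n: "n = 2*m" by (simp add: m_def)
      have rn: "real n = 2 * x" by (simp add: n x_def)
      have "\<alpha> * (real n)^2 / 2 = 2 * \<alpha> * x^2" by (simp add: rn power2_eq_square)
      moreover have "5 * real n * sqrt (real n) \<ge> 14 * t" using s2 rn by simp
      moreover have "2 * x \<le> 4 * t" using tx x0 by linarith
      moreover have "real (f4 n) \<le> 2 * \<alpha> * x^2 + 10 * t + 2 * x" using ev n by simp
      ultimately show ?thesis by (rule lin1)
    next
      case False
      then have n: "n = Suc (2*m)" by (simp add: m_def)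
      have rn: "real n = 2 * x + 1" by (simp add: n x_def)
      have o: "real (f4 n) \<le> real (f4 (2*m)) + 2 * x" using f4_odd[of "2*m"] n x_def by simp
      have "\<alpha> * (real n)^2 / 2 \<ge> 2 * \<alpha> * x^2"
      proof -
        have "(real n)^2 \<ge> (2*x)^2" using rn x0 by (intro power_mono) auto
        then have "\<alpha> * (real n)^2 \<ge> \<alpha> * (2*x)^2" using a by (intro mult_left_mono) auto
        then show ?thesis by (simp add: power2_eq_square)
      qed
      moreover have "5 * real n * sqrt (real n) \<ge> 5 * ((2*x) * sqrt (2*x))"
      proof -
        have "sqrt (real n) \<ge> sqrt (2*x)" using rn by simp
        moreover have "real n \<ge> 2*x" using rn by simp
        ultimately have "real n * sqrt (real n) \<ge> (2*x) * sqrt (2*x)" using x0 by (intro mult_mono) auto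
        then show ?thesis by simp
      qed
      ultimately show ?thesis by (rule lin2[OF o ev _ _ s2 tx])
    qed
  qed
qed

theorem mainTheorem3:
  fixes \<alpha> :: real
  assumes "\<alpha> > 0"
    and "\<forall>n. real (g n) \<le> \<alpha> * (real n)^2"
  shows "\<forall>\<epsilon>>0. eventually (\<lambda>n. real (f4 n) \<le> \<alpha> * (1 + \<epsilon>) * (real n)^2 / 2) at_top"
proof (intro allI impI)
  fix \<epsilon> :: real assume eps: "\<epsilon> > 0"
  define c where "c = 10 / (\<alpha> * \<epsilon>)"
  have ae: "\<alpha> * \<epsilon> > 0" using assms(1) eps by simp
  have cpos: "c > 0" unfolding c_def using ae by simp
  have aec: "\<alpha> * \<epsilon> * c = 10" unfolding c_def using ae assms(1) eps by simp
  show "eventually (\<lambda>n. real (f4 n) \<le> \<alpha> * (1 + \<epsilon>) * (real n)^2 / 2) at_top"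
    unfolding eventually_at_top_linorder
  proof (intro exI[of _ "nat \<lceil>c^2\<rceil> + 1"] allI impI)
    fix n assume hn: "n \<ge> nat \<lceil>c^2\<rceil> + 1"
    have "c^2 \<le> real (nat \<lceil>c^2\<rceil>)" by (rule real_nat_ceiling_ge)
    also have "\<dots> \<le> real n" using hn by simp
    finally have rn: "c^2 \<le> real n" .
    define r where "r = sqrt (real n)"
    have r0: "r \<ge> 0" unfolding r_def by simp
    have "sqrt (c^2) \<le> r" unfolding r_def using rn by (rule real_sqrt_le_mono)
    then have rc: "c \<le> r" using cpos by simp
    have "10 \<le> \<alpha> * \<epsilon> * r" using mult_left_mono[OF rc, of "\<alpha> * \<epsilon>"] ae aec by simp
    have nrr: "real n = r * r" unfolding r_def by simp
    have nr0: "real n * r \<ge> 0" using r0 by simp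
    have "5 * real n * r = (real n * r) * 10 / 2" by simp
    also have "\<dots> \<le> (real n * r) * (\<alpha> * \<epsilon> * r) / 2"
      using mult_left_mono[OF \<open>10 \<le> \<alpha> * \<epsilon> * r\<close> nr0] by (simp add: mult.commute)
    also have "\<dots> = \<alpha> * \<epsilon> * (real n)^2 / 2" by (simp add: nrr power2_eq_square algebra_simps)
    finally have k: "5 * real n * r \<le> \<alpha> * \<epsilon> * (real n)^2 / 2" .
    have "real (f4 n) \<le> \<alpha> * (real n)^2 / 2 + 5 * real n * r"
      unfolding r_def by (rule key_bound[OF assms])
    also have "\<dots> \<le> \<alpha> * (real n)^2 / 2 + \<alpha> * \<epsilon> * (real n)^2 / 2" using k by simp
    also have "\<dots> = \<alpha> * (1 + \<epsilon>) * (real n)^2 / 2" by (simp add: algebra_simps)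
    finally show "real (f4 n) \<le> \<alpha> * (1 + \<epsilon>) * (real n)^2 / 2" .
  qed
qed

end
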